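(* Let $\mathcal{C}$ be a periodic cylinder of $\Phi$ of even period $2n$, with itinerary $i_0,\dots,i_{2n-1}$ (indices taken mod $2n$, so $i_{2n}=i_0$) and angle of departure $\hat\theta_0$. If $\mathcal{C}$ is $\lambda^-$-stable or $\lambda^+$-stable, then $$\hat\theta_0=\frac{1}{2n}\sum_{k=0}^{2n-1}(-1)^{k+1}k\,\beta_{i_k,i_{k+1}}.$$
   Context: Let $P$ be a simply connected polygon in $\mathbb{R}^2$ with $d$ sides, labeled $1,\dots,d$, with $\partial P$ oriented anticlockwise. The billiard map $\Phi$ acts on unit vectors $(x,v)$ with $x\in\partial P$ and $v$ pointing into $P$: $\Phi(x,v)=(\bar x,\bar v)$, where $\bar x$ is the first point at which the ray from $x$ in direction $v$ meets $\partial P$ and $\bar v$ is the inward vector obtained by reflecting $v$ in the side containing $\bar x$. Vectors based at vertices, and vectors whose image would be based at a vertex, are excluded; the remaining domain is $M'$. Points of $M'$ have coordinates $(s,\theta)$, $s$ the arc-length parameter of $x$ on $\partial P$, $\theta\in(-\pi/2,\pi/2)$ the oriented angle between $v$ and the inward normal at $x$. $\Sigma_{i,j}$ is the set of $(s,\theta)\in M'$ with $x$ on side $i$ and $\bar x$ on side $j$. $\beta_{i,j}$ denotes $\pi$ minus the angle formed by the oriented sides $i$ and $j$; for $(s,\theta)\in\Sigma_{i,j}$ the angle coordinate of $\Phi(s,\theta)$ is $\beta_{i,j}-\theta$. For $\lambda>0$ let $R_\lambda(s,\theta)=(s,\lambda\theta)$ and $\Phi_\lambda:=R_\lambda\circ\Phi$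 (pinball billiard map for $\lambda\neq1$). The itinerary of an orbit $(s_k,\theta_k)$ is the sequence $(i_k)$ with $(s_k,\theta_k)\in\Sigma_{i_k,i_{k+1}}$. Every periodic orbit of $\Phi$ lies in a periodic cylinder: a maximal one-parameter family of parallel periodic orbits of $\Phi$ with the same itinerary. For a cylinder of period $2n$ with itinerary $i_0,\dots,i_{2n-1}$, the angles of its orbits at the successive collisions are constants $\hat\theta_0,\dots,\hat\theta_{2n-1}$; $\hat\theta_0$ (the angle at side $i_0$) is the angle of departure. A periodic orbit $q$ of $\Phi$ is $\lambda^{+}$-stable (resp. $\lambda^-$-stable) if there exist a strictly decreasing (resp. strictly increasing) sequence $\lambda_n\to1$ and, for each $n$, a periodic orbit $q_n$ of $\Phi_{\lambda_n}$ with the same itinerary as $q$ such that $q_n\to q$. A periodic cylinder is $\lambda^\pm$-stable if it contains a $\lambda^\pm$-stable periodic orbit. *)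

theory Defs
  imports "HOL-Analysis.Analysis"
begin

text \<open>A polygon with d sides is given by its vertices p 0, ..., p (d-1) in the
  complex plane (= R^2).  Sides are labelled 0..d-1 (the paper uses 1..d):
  side i is the closed segment from p i to p (nxt d i).\<close>

definition nxt :: "nat \<Rightarrow> nat \<Rightarrow> nat" where
  "nxt d i = Suc i mod d"

definition side_seg :: "(nat \<Rightarrow> complex) \<Rightarrow> nat \<Rightarrow> nat \<Rightarrow> complex set" where
  "side_seg p d i = closed_segment (p i) (p (nxt d i))"

definition boundary_poly :: "(nat \<Rightarrow> complex) \<Rightarrow> nat \<Rightarrow> complex set" where
  "boundary_poly p d = (\<Union>i\<in>{..<d}. side_seg p d i)"

definition simple_polygon :: "(nat \<Rightarrow> complex) \<Rightarrow> nat \<Rightarrow> bool" where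
  "simple_polygon p d \<longleftrightarrow> 3 \<le> d \<and> inj_on p {..<d} \<and>
     (\<forall>i<d. \<forall>j<d. i \<noteq> j \<longrightarrow>
        side_seg p d i \<inter> side_seg p d j =
          (if j = nxt d i then {p j} else if i = nxt d j then {p i} else {}))"

text \<open>Anticlockwise orientation of the boundary: positive signed area.\<close>
definition anticlockwise :: "(nat \<Rightarrow> complex) \<Rightarrow> nat \<Rightarrow> bool" where
  "anticlockwise p d \<longleftrightarrow> (\<Sum>i<d. Im (cnj (p i) * p (nxt d i))) > 0"

definition side_len :: "(nat \<Rightarrow> complex) \<Rightarrow> nat \<Rightarrow> nat \<Rightarrow> real" where
  "side_len p d i = cmod (p (nxt d i) - p i)"

definition cum :: "(nat \<Rightarrow> complex) \<Rightarrow> nat \<Rightarrow> nat \<Rightarrow> real" where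
  "cum p d i = (\<Sum>j<i. side_len p d j)"

definition perimeter :: "(nat \<Rightarrow> complex) \<Rightarrow> nat \<Rightarrow> real" where
  "perimeter p d = cum p d d"

definition nonvertex :: "(nat \<Rightarrow> complex) \<Rightarrow> nat \<Rightarrow> real \<Rightarrow> bool" where
  "nonvertex p d s \<longleftrightarrow> 0 \<le> s \<and> s < perimeter p d \<and> (\<forall>i<d. s \<noteq> cum p d i)"

definition side_of :: "(nat \<Rightarrow> complex) \<Rightarrow> nat \<Rightarrow> real \<Rightarrow> nat" where
  "side_of p d s = (THE i. i < d \<and> cum p d i < s \<and> s < cum p d (Suc i))"

text \<open>Unit direction of the oriented side i, and the inward unit normal
  (rotation by +90 degrees: the interior lies to the left for an anticlockwise boundary).\<close>
definition udir :: "(nat \<Rightarrow> complex) \<Rightarrow> nat \<Rightarrow> nat \<Rightarrow> complex" where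
  "udir p d i = sgn (p (nxt d i) - p i)"

definition inormal :: "(nat \<Rightarrow> complex) \<Rightarrow> nat \<Rightarrow> nat \<Rightarrow> complex" where
  "inormal p d i = \<i> * udir p d i"

definition bpos :: "(nat \<Rightarrow> complex) \<Rightarrow> nat \<Rightarrow> real \<Rightarrow> complex" where
  "bpos p d s = p (side_of p d s) + of_real (s - cum p d (side_of p d s)) * udir p d (side_of p d s)"

text \<open>Unit vector at side i making oriented angle theta with the inward normal
  (theta is the angle by which v must be rotated anticlockwise to reach the normal).\<close>
definition vel :: "(nat \<Rightarrow> complex) \<Rightarrow> nat \<Rightarrow> nat \<Rightarrow> real \<Rightarrow> complex" where
  "vel p d i \<theta> = inormal p d i * cis (- \<theta>)"

text \<open>The image is based at the first point where the ray meets the boundary, and the new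
  velocity is the reflection of v in the side hit (reflection in a line with unit direction u
  is w \<mapsto> u^2 * cnj w).\<close>
definition billiard :: "(nat \<Rightarrow> complex) \<Rightarrow> nat \<Rightarrow> real \<times> real \<Rightarrow> real \<times> real \<Rightarrow> bool" where
  "billiard p d a b \<longleftrightarrow>
     (case a of (s, \<theta>) \<Rightarrow> case b of (s', \<theta>') \<Rightarrow>
       nonvertex p d s \<and> \<bar>\<theta>\<bar> < pi/2 \<and> nonvertex p d s' \<and> \<bar>\<theta>'\<bar> < pi/2 \<and>
       (let x = bpos p d s; v = vel p d (side_of p d s) \<theta>; u = udir p d (side_of p d s') in
         (\<exists>t>0. bpos p d s' = x + of_real t * v \<and>
                (\<forall>r. 0 < r \<and> r < t \<longrightarrow> x + of_real r * v \<notin> boundary_poly p d)) \<and>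
         vel p d (side_of p d s') \<theta>' = u^2 * cnj v))"

definition pinball :: "(nat \<Rightarrow> complex) \<Rightarrow> nat \<Rightarrow> real \<Rightarrow> real \<times> real \<Rightarrow> real \<times> real \<Rightarrow> bool" where
  "pinball p d lam a b \<longleftrightarrow> (\<exists>\<theta>'. billiard p d a (fst b, \<theta>') \<and> snd b = lam * \<theta>')"

definition is_orbit :: "(nat \<Rightarrow> complex) \<Rightarrow> nat \<Rightarrow> real \<Rightarrow> (nat \<Rightarrow> real \<times> real) \<Rightarrow> bool" where
  "is_orbit p d lam q \<longleftrightarrow> (\<forall>k. pinball p d lam (q k) (q (Suc k)))"

definition itinerary :: "(nat \<Rightarrow> complex) \<Rightarrow> nat \<Rightarrow> (nat \<Rightarrow> real \<times> real) \<Rightarrow> nat \<Rightarrow> nat" where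
  "itinerary p d q k = side_of p d (fst (q k))"

definition periodic_seq :: "(nat \<Rightarrow> 'a) \<Rightarrow> bool" where
  "periodic_seq q \<longleftrightarrow> (\<exists>m>0. \<forall>k. q (k + m) = q k)"

definition periodic_orbit :: "(nat \<Rightarrow> complex) \<Rightarrow> nat \<Rightarrow> real \<Rightarrow> (nat \<Rightarrow> real \<times> real) \<Rightarrow> bool" where
  "periodic_orbit p d lam q \<longleftrightarrow> 0 < lam \<and> is_orbit p d lam q \<and> periodic_seq q"

definition lambda_minus_stable :: "(nat \<Rightarrow> complex) \<Rightarrow> nat \<Rightarrow> (nat \<Rightarrow> real \<times> real) \<Rightarrow> bool" where
  "lambda_minus_stable p d q \<longleftrightarrow>
     (\<exists>lam qs. (\<forall>m. lam m < lam (Suc m)) \<and> lam \<longlonglongrightarrow> 1 \<and>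
        (\<forall>m. periodic_orbit p d (lam m) (qs m) \<and> itinerary p d (qs m) = itinerary p d q) \<and>
        (\<lambda>m. qs m 0) \<longlonglongrightarrow> q 0)"

definition lambda_plus_stable :: "(nat \<Rightarrow> complex) \<Rightarrow> nat \<Rightarrow> (nat \<Rightarrow> real \<times> real) \<Rightarrow> bool" where
  "lambda_plus_stable p d q \<longleftrightarrow>
     (\<exists>lam qs. (\<forall>m. lam (Suc m) < lam m) \<and> lam \<longlonglongrightarrow> 1 \<and>
        (\<forall>m. periodic_orbit p d (lam m) (qs m) \<and> itinerary p d (qs m) = itinerary p d q) \<and>
        (\<lambda>m. qs m 0) \<longlonglongrightarrow> q 0)"

definition side_angle :: "(nat \<Rightarrow> complex) \<Rightarrow> nat \<Rightarrow> nat \<Rightarrow> nat \<Rightarrow> real" where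
  "side_angle p d i j =
     (let a = Arg (udir p d j / udir p d i) in if a < 0 then a + 2 * pi else a)"

definition beta :: "(nat \<Rightarrow> complex) \<Rightarrow> nat \<Rightarrow> nat \<Rightarrow> nat \<Rightarrow> real" where
  "beta p d i j = pi - side_angle p d i j"

end

theory Submission
  imports Defs
begin


lemma cum_mono: "i \<le> j \<Longrightarrow> cum p d i \<le> cum p d j"
  unfolding cum_def side_len_def
  by (rule sum_mono2) auto

lemma side_of_lt:
  assumes "nonvertex p d s"
  shows "side_of p d s < d"
proof -
  have s0: "0 \<le> s" "s < perimeter p d" "\<forall>i<d. s \<noteq> cum p d i"
    using assms unfolding nonvertex_def by auto
  have d0: "0 < d"
  proof (rule ccontr)
    assume "\<not> 0 < d" then have "d = 0" by simp
    then show False using s0 by (simp add: perimeter_def cum_def)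
  qed
  define A where "A = {j. j < d \<and> cum p d j < s}"
  have "0 \<in> A" using s0 d0 by (auto simp: A_def cum_def)
  have fA: "finite A" by (simp add: A_def)
  define i where "i = Max A"
  have "A \<noteq> {}" using \<open>0 \<in> A\<close> by blast
  then have iA: "i \<in> A" unfolding i_def by (rule Max_in[OF fA])
  have ex: "i < d \<and> cum p d i < s \<and> s < cum p d (Suc i)"
  proof -
    have "s < cum p d (Suc i)"
    proof (cases "Suc i = d")
      case True then show ?thesis using s0 by (simp add: perimeter_def)
    next
      case False
      then have "Suc i < d" using iA by (auto simp: A_def)
      moreover have "Suc i \<notin> A"
      proof
        assume "Suc i \<in> A"
        then have "Suc i \<le> i" unfolding i_def by (rule Max_ge[OF fA])
        then show False by simp
      qed
      ultimately have "s \<le> cum p d (Suc i)" by (auto simp: A_def)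
      moreover have "s \<noteq> cum p d (Suc i)" using s0 \<open>Suc i < d\<close> by auto
      ultimately show ?thesis by simp
    qed
    then show ?thesis using iA by (auto simp: A_def)
  qed
  have un: "j = i" if "j < d \<and> cum p d j < s \<and> s < cum p d (Suc j)" for j
  proof (rule ccontr)
    assume "j \<noteq> i"
    then consider "j < i" | "i < j" by linarith
    then show False
    proof cases
      case 1 then have "cum p d (Suc j) \<le> cum p d i" by (intro cum_mono) simp
      then show False using that ex by linarith
    next
      case 2 then have "cum p d (Suc i) \<le> cum p d j" by (intro cum_mono) simp
      then show False using that ex by linarith
    qed
  qed
  have "side_of p d s = i" unfolding side_of_def
    by (rule the_equality) (rule ex, rule un)
  then show ?thesis using ex by simp
qed

lemma udir_norm:
  assumes "simple_polygon p d" "j < d"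
  shows "norm (udir p d j) = 1"
proof -
  note sp = assms(1)[unfolded simple_polygon_def]
  have d3: "3 \<le> d" using conjunct1[OF sp] .
  have inj: "inj_on p {..<d}" using conjunct1[OF conjunct2[OF sp]] .
  have n1: "nxt d j < d" unfolding nxt_def using d3 by (intro mod_less_divisor) simp
  have n2: "nxt d j \<noteq> j"
  proof (cases "Suc j = d")
    case True then show ?thesis using d3 by (simp add: nxt_def)
  next
    case False then have "Suc j < d" using assms by simp
    then show ?thesis by (simp add: nxt_def)
  qed
  have "p (nxt d j) \<noteq> p j"
  proof
    assume "p (nxt d j) = p j"
    then have "nxt d j = j" using inj_onD[OF inj] n1 assms(2) by simp
    then show False using n2 by simp
  qed
  then have "p (nxt d j) - p j \<noteq> 0" by simp
  then show ?thesis unfolding udir_def by (simp add: norm_sgn)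
qed

lemma angle_lemma:
  fixes u u' :: complex
  assumes nu: "norm u = 1" and nu': "norm u' = 1"
    and th: "\<bar>\<theta>\<bar> < pi/2" and th': "\<bar>\<theta>'\<bar> < pi/2"
    and eq: "\<i> * u' * cis (- \<theta>') = u'^2 * cnj (\<i> * u * cis (- \<theta>))"
  shows "\<theta>' = pi - (let a = Arg (u' / u) in if a < 0 then a + 2 * pi else a) - \<theta>"
proof -
  define sa where "sa = (let a = Arg (u' / u) in if a < 0 then a + 2 * pi else a)"
  have u0: "u \<noteq> 0" "u' \<noteq> 0" using nu nu' by auto
  have ucnj: "u * cnj u = 1" using complex_norm_square[of u] nu by simp
  have "\<i> * u' * cis (- \<theta>') = \<i> * u' * (- (u' * cnj u * cis \<theta>))"
    using eq by (simp add: cis_cnj power2_eq_square algebra_simps)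
  moreover have "\<i> * u' \<noteq> 0" using u0 by simp
  ultimately have e1: "cis (- \<theta>') = - (u' * cnj u * cis \<theta>)"
    using mult_left_cancel[of "\<i> * u'"] by (metis mult_minus_right)
  have "u' * cnj u = u' / u" using ucnj u0 by (simp add: field_simps)
  also have "\<dots> = cis (Arg (u' / u))" using u0 nu nu' by (simp add: cis_Arg sgn_div_norm norm_divide)
  also have "\<dots> = cis sa"
    by (simp add: sa_def Let_def cis_mult[symmetric])
  finally have "cis (- \<theta>') = cis (pi + sa + \<theta>)"
    using e1 by (simp add: cis_mult[symmetric])
  then have "sin (- \<theta>') = sin (pi + sa + \<theta>) \<and> cos (- \<theta>') = cos (pi + sa + \<theta>)"
    by (metis cis.sel)
  then obtain k :: int where k: "- \<theta>' = pi + sa + \<theta> + 2 * pi * k"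
    using sin_cos_eq_iff by blast
  have sab: "0 \<le> sa" "sa < 2 * pi" using Arg_bounded[of "u'/u"] by (auto simp: sa_def Let_def)
  have "2 * pi * k < 0" "-4 * pi < 2 * pi * k" using k sab th th' by (auto simp: abs_less_iff)
  note kk = this
  have h1: "0 < (2*pi) * (real_of_int k + 2)" using kk(2) by (simp add: algebra_simps)
  have "0 < real_of_int k + 2" using h1 pi_gt_zero by (simp add: zero_less_mult_iff)
  moreover have "real_of_int k < 0" using kk(1) pi_gt_zero by (simp add: mult_less_0_iff)
  ultimately have "real_of_int k < 0" "-2 < real_of_int k" by auto
  then have "k = -1" by linarith
  then show ?thesis using k by (simp add: sa_def)
qed


lemma pinball_step:
  assumes sp: "simple_polygon p d" and pb: "pinball p d lam a b"
  shows "snd b = lam * (beta p d (side_of p d (fst a)) (side_of p d (fst b)) - snd a)"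
proof -
  obtain \<theta>' where bil: "billiard p d a (fst b, \<theta>')" and sb: "snd b = lam * \<theta>'"
    using pb unfolding pinball_def by blast
  obtain s \<theta> where a: "a = (s, \<theta>)" by (cases a)
  define s' where "s' = fst b"
  from bil have h: "nonvertex p d s" "\<bar>\<theta>\<bar> < pi/2" "nonvertex p d s'" "\<bar>\<theta>'\<bar> < pi/2"
     "vel p d (side_of p d s') \<theta>' = (udir p d (side_of p d s'))^2 * cnj (vel p d (side_of p d s) \<theta>)"
    unfolding billiard_def a s'_def Let_def by auto
  have n1: "norm (udir p d (side_of p d s)) = 1" using udir_norm[OF sp side_of_lt[OF h(1)]] .
  have n2: "norm (udir p d (side_of p d s')) = 1" using udir_norm[OF sp side_of_lt[OF h(3)]] .
  have "\<theta>' = beta p d (side_of p d s) (side_of p d s') - \<theta>"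
    using angle_lemma[OF n1 n2 h(2) h(4) h(5)[unfolded vel_def inormal_def]]
    unfolding beta_def side_angle_def by simp
  then show ?thesis using sb a s'_def by simp
qed

lemma iter_rec:
  fixes y b :: "nat \<Rightarrow> real"
  assumes rec: "\<And>k. y (Suc k) = lam * (b k - y k)"
  shows "y (a + t) = (-lam)^t * y a + (\<Sum>k<t. (-lam)^(t - Suc k) * lam * b (a + k))"
proof (induction t)
  case 0 show ?case by simp
next
  case (Suc t)
  have "(\<Sum>k<t. (-lam)^(Suc t - Suc k) * lam * b (a + k))
      = (\<Sum>k<t. (-lam) * ((-lam)^(t - Suc k) * lam * b (a + k)))"
  proof (rule sum.cong)
    fix k assume "k \<in> {..<t}"
    then have "Suc t - Suc k = Suc (t - Suc k)" by simp
    then show "(-lam)^(Suc t - Suc k) * lam * b (a + k) = (-lam) * ((-lam)^(t - Suc k) * lam * b (a + k))"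
      by (simp only: power_Suc)
  qed simp
  then have "(\<Sum>k<Suc t. (-lam)^(Suc t - Suc k) * lam * b (a + k))
      = (-lam) * (\<Sum>k<t. (-lam)^(t - Suc k) * lam * b (a + k)) + lam * b (a+t)"
    by (simp add: sum_distrib_left)
  then show ?case using Suc.IH rec[of "a+t"] by (simp add: algebra_simps)
qed

lemma neg1_par:
  assumes "even N" "k < N"
  shows "(-1::real)^(N - Suc k) = - ((-1::real) ^ k)"
proof -
  have par: "even (N - Suc k) \<longleftrightarrow> odd k" using assms by presburger
  show ?thesis using par by (simp add: minus_one_power_iff)
qed


lemma fixed_point:
  fixes y b :: "nat \<Rightarrow> real" and N P :: nat and lam :: real
  assumes rec: "\<And>k. y (Suc k) = lam * (b k - y k)"
    and bper: "\<And>k. b (k + N) = b k" and yper: "\<And>k. y (k + P) = y k"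
    and N0: "0 < N" and Ne: "even N" and P0: "0 < P" and l0: "0 < lam" and l1: "lam \<noteq> 1"
    and S0: "(\<Sum>k<N. (-1)^k * b k) = 0"
  shows "y 0 = (\<Sum>k<N. (-1)^k * b k * (\<Sum>t<N-k. lam^t)) / (\<Sum>t<N. lam^t)"
proof -
  define L where "L = lam^N"
  define C where "C = (\<Sum>k<N. (-lam)^(N - Suc k) * lam * b k)"
  define Nf where "Nf = (\<Sum>k<N. (-1)^k * b k * (\<Sum>t<N-k. lam^t))"
  define Df where "Df = (\<Sum>t<N. lam^t)"
  have bper2: "b (j*N + k) = b k" for j k
  proof (induction j)
    case 0 then show ?case by simp
  next
    case (Suc j)
    have "Suc j * N + k = (j*N + k) + N" by simp
    then show ?case by (metis bper Suc.IH)
  qed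
  have step: "y (Suc j * N) = L * y (j*N) + C" for j
  proof -
    have sj: "Suc j * N = j*N + N" by simp
    have "y (j*N + N) = (-lam)^N * y (j*N) + (\<Sum>k<N. (-lam)^(N - Suc k) * lam * b (j*N + k))"
      by (rule iter_rec[of y lam b, OF rec])
    moreover have "(-lam)^N = L" using Ne by (simp add: L_def)
    ultimately have "y (j*N + N) = L * y (j*N) + C" using bper2 by (simp add: C_def)
    then show ?thesis by (simp only: sj)
  qed
  have inv: "(1 - L) * y (j*N) - C = L^j * ((1-L) * y 0 - C)" for j
  proof (induction j)
    case 0 then show ?case by simp
  next
    case (Suc j)
    have "(1 - L) * y (Suc j * N) - C = L * ((1 - L) * y (j*N) - C)"
      unfolding step[of j] by (simp add: algebra_simps)
    then show ?case using Suc.IH by simp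
  qed
  have yP: "y (j*P) = y 0" for j
  proof (induction j)
    case 0 then show ?case by simp
  next
    case (Suc j)
    have "Suc j * P = j*P + P" by simp
    then show ?case by (metis yper Suc.IH)
  qed
  have "y (N*P) = y 0" using yP[of N] by (simp add: mult.commute)
  then have "(1 - L) * y 0 - C = L^P * ((1-L) * y 0 - C)" using inv[of P] by (simp add: mult.commute)
  then have e: "(1 - L^P) * ((1 - L) * y 0 - C) = 0" by (simp add: algebra_simps)
  have "L^P \<noteq> 1"
  proof
    assume "L^P = 1"
    then have "lam^(N*P) = 1" by (simp add: L_def power_mult)
    then have "norm lam = 1 \<or> N*P = 0" by (rule power_eq_1_iff)
    then show False using l0 l1 N0 P0 by auto
  qed
  with e have e2: "(1 - L) * y 0 = C" by simp
  have C1: "C = (\<Sum>k<N. (-1)^k * b k * (1 - lam^(N-k)))"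
  proof -
    have "C = (\<Sum>k<N. - ((-1)^k * b k * lam^(N-k)))"
      unfolding C_def
    proof (rule sum.cong)
      fix k assume "k \<in> {..<N}"
      then have k: "k < N" by simp
      have "(-lam)^(N - Suc k) = (-1)^(N - Suc k) * lam^(N - Suc k)"
        by (rule power_minus)
      also have "\<dots> = - ((-1)^k) * lam^(N - Suc k)" using neg1_par[OF Ne k] by simp
      finally have "(-lam)^(N - Suc k) * lam = - ((-1)^k) * lam^(Suc (N - Suc k))" by simp
      also have "Suc (N - Suc k) = N - k" using k by simp
      finally show "(-lam)^(N - Suc k) * lam * b k = - ((-1)^k * b k * lam^(N-k))" by simp
    qed simp
    also have "\<dots> = (\<Sum>k<N. (-1)^k * b k) - (\<Sum>k<N. (-1)^k * b k * lam^(N-k))"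
      using S0 by (simp add: sum_negf)
    also have "\<dots> = (\<Sum>k<N. (-1)^k * b k * (1 - lam^(N-k)))"
      by (simp add: sum_subtractf[symmetric] algebra_simps)
    finally show ?thesis .
  qed
  have C2: "C = (1 - lam) * Nf"
  proof -
    have "C = (\<Sum>k<N. (1-lam) * ((-1)^k * b k * (\<Sum>t<N-k. lam^t)))"
      unfolding C1 by (rule sum.cong) (simp, subst one_diff_power_eq, simp add: mult_ac)
    also have "\<dots> = (1 - lam) * Nf" by (simp only: Nf_def sum_distrib_left)
    finally show ?thesis .
  qed
  have L2: "1 - L = (1 - lam) * Df" unfolding L_def Df_def by (rule one_diff_power_eq)
  have "(1 - lam) * (Df * y 0) = (1 - lam) * Nf" using e2 C2 L2 by (simp add: algebra_simps)
  then have "Df * y 0 = Nf" using l1 by simp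
  moreover have "Df > 0" unfolding Df_def using N0 l0 by (intro sum_pos) auto
  ultimately have "y 0 = Nf / Df" by (simp add: field_simps)
  then show ?thesis by (simp add: Nf_def Df_def)
qed


theorem proposition3p2:
  fixes p :: "nat \<Rightarrow> complex" and d n :: nat
    and q :: "nat \<Rightarrow> real \<times> real" and i :: "nat \<Rightarrow> nat"
  assumes "simple_polygon p d" and "anticlockwise p d"
    and "n \<ge> 1"
    and "is_orbit p d 1 q" and "\<forall>k. q (k + 2 * n) = q k"
    and "itinerary p d q = i"
    and "lambda_minus_stable p d q \<or> lambda_plus_stable p d q"
  shows "snd (q 0) =
    (1 / (2 * real n)) * (\<Sum>k<2 * n. (-1) ^ (k + 1) * real k * beta p d (i k) (i (k + 1)))"
proof -
  define b where "b k = beta p d (i k) (i (k+1))" for k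
  define N where "N = 2*n"
  have N0: "0 < N" using assms(3) by (simp add: N_def)
  have Ne: "even N" by (simp add: N_def)
  have ieq: "i k = side_of p d (fst (q k))" for k
    using fun_cong[OF assms(6), of k] unfolding itinerary_def by simp
  have iper: "i (k + N) = i k" for k
    using ieq assms(5) by (simp add: N_def)
  have bper: "b (k + N) = b k" for k
    using iper[of k] iper[of "k+1"] by (simp add: b_def add.commute add.left_commute)
  have orbit_rec: "snd (r (Suc k)) = lam * (b k - snd (r k))"
    if "is_orbit p d lam r" "itinerary p d r = i" for r lam k
  proof -
    have pb: "pinball p d lam (r k) (r (Suc k))" using that(1) unfolding is_orbit_def by blast
    have e1: "side_of p d (fst (r k)) = i k"
      using fun_cong[OF that(2), of k] unfolding itinerary_def by simp
    have e2: "side_of p d (fst (r (Suc k))) = i (k+1)"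
      using fun_cong[OF that(2), of "Suc k"] unfolding itinerary_def by simp
    show ?thesis using pinball_step[OF assms(1) pb] unfolding e1 e2 b_def .
  qed
  have S0: "(\<Sum>k<N. (-1)^k * b k) = 0"
  proof -
    have rq: "snd (q (Suc k)) = 1 * (b k - snd (q k))" for k
      using orbit_rec[OF assms(4) assms(6)] .
    have "snd (q (0 + N)) = (-1)^N * snd (q 0) + (\<Sum>k<N. (-1)^(N - Suc k) * 1 * b (0 + k))"
      using iter_rec[where y="\<lambda>k. snd (q k)" and lam=1 and b=b and a=0 and t=N, OF rq] by simp
    moreover have "q (0 + N) = q 0" using assms(5)[rule_format, of 0] by (simp add: N_def)
    ultimately have "(\<Sum>k<N. (-1)^(N - Suc k) * b k) = (0::real)" using Ne by simp
    moreover have "(\<Sum>k<N. (-1)^(N - Suc k) * b k) = (\<Sum>k<N. - ((-1)^k * b k))"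
      by (rule sum.cong) (simp_all add: neg1_par[OF Ne])
    moreover have "(\<Sum>k<N. - ((-1)^k * b k)) = - (\<Sum>k<N. (-1)^k * b k)"
      by (rule sum_negf)
    ultimately show ?thesis by simp
  qed
  have "\<exists>lam qs. (\<forall>m. lam m \<noteq> (1::real)) \<and> lam \<longlonglongrightarrow> 1 \<and>
        (\<forall>m. periodic_orbit p d (lam m) (qs m) \<and> itinerary p d (qs m) = itinerary p d q) \<and>
        (\<lambda>m. qs m 0) \<longlonglongrightarrow> q 0"
    using assms(7)
  proof
    assume "lambda_minus_stable p d q"
    then obtain lam qs where h: "\<forall>m. lam m < lam (Suc m)" "lam \<longlonglongrightarrow> 1"
        "\<forall>m. periodic_orbit p d (lam m) (qs m) \<and> itinerary p d (qs m) = itinerary p d q"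
        "(\<lambda>m. qs m 0) \<longlonglongrightarrow> q 0"
      unfolding lambda_minus_stable_def by blast
    have inc: "incseq lam" by (rule incseq_SucI) (simp add: h(1) less_imp_le)
    have "lam m < 1" for m using h(1) incseq_le[OF inc h(2), of "Suc m"] by (metis order_less_le_trans)
    then have "\<forall>m. lam m \<noteq> 1" by (metis less_irrefl)
    then show ?thesis using h by blast
  next
    assume "lambda_plus_stable p d q"
    then obtain lam qs where h: "\<forall>m. lam (Suc m) < lam m" "lam \<longlonglongrightarrow> 1"
        "\<forall>m. periodic_orbit p d (lam m) (qs m) \<and> itinerary p d (qs m) = itinerary p d q"
        "(\<lambda>m. qs m 0) \<longlonglongrightarrow> q 0"
      unfolding lambda_plus_stable_def by blast
    have dec: "decseq lam" by (rule decseq_SucI) (simp add: h(1) less_imp_le)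
    have "1 < lam m" for m using h(1) decseq_ge[OF dec h(2), of "Suc m"] by (metis order_le_less_trans)
    then have "\<forall>m. lam m \<noteq> 1" by (metis less_irrefl)
    then show ?thesis using h by blast
  qed
  then obtain lam qs where h: "\<forall>m. lam m \<noteq> (1::real)" "lam \<longlonglongrightarrow> 1"
        "\<forall>m. periodic_orbit p d (lam m) (qs m) \<and> itinerary p d (qs m) = itinerary p d q"
        "(\<lambda>m. qs m 0) \<longlonglongrightarrow> q 0"
    by blast
  define G where "G x = (\<Sum>k<N. (-1)^k * b k * (\<Sum>t<N-k. x^t)) / (\<Sum>t<N. x^t)" for x :: real
  have val: "snd (qs m 0) = G (lam m)" for m
  proof -
    have po: "periodic_orbit p d (lam m) (qs m)" and it: "itinerary p d (qs m) = i"
      using h(3) assms(6) by auto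
    then have l0: "0 < lam m" and orb: "is_orbit p d (lam m) (qs m)" and ps: "periodic_seq (qs m)"
      unfolding periodic_orbit_def by auto
    obtain P where P0: "0 < P" and Pp: "\<forall>k. qs m (k + P) = qs m k"
      using ps unfolding periodic_seq_def by blast
    have rr: "snd (qs m (Suc k)) = lam m * (b k - snd (qs m k))" for k
      using orbit_rec[OF orb it] .
    have yper: "snd (qs m (k + P)) = snd (qs m k)" for k using Pp by simp
    show ?thesis unfolding G_def
      by (rule fixed_point[of "\<lambda>k. snd (qs m k)" "lam m" b N P, OF rr bper yper N0 Ne P0 l0 h(1)[rule_format] S0])
  qed
  have t1: "(\<lambda>m. \<Sum>k<N. (-1)^k * b k * (\<Sum>t<N-k. lam m ^ t))
      \<longlonglongrightarrow> (\<Sum>k<N. (-1)^k * b k * (\<Sum>t<N-k. 1 ^ t))"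
    by (intro tendsto_sum tendsto_mult tendsto_const tendsto_power h(2))
  have t2: "(\<lambda>m. \<Sum>t<N. lam m ^ t) \<longlonglongrightarrow> (\<Sum>t<N. 1 ^ t)"
    by (intro tendsto_sum tendsto_power h(2))
  have nz: "(\<Sum>t<N. (1::real) ^ t) \<noteq> 0" using N0 by simp
  have "(\<lambda>m. G (lam m)) \<longlonglongrightarrow> G 1"
    unfolding G_def by (rule tendsto_divide[OF t1 t2 nz])
  moreover have "(\<lambda>m. G (lam m)) \<longlonglongrightarrow> snd (q 0)"
    unfolding val[symmetric] using tendsto_snd[OF h(4)] .
  ultimately have q0: "snd (q 0) = G 1" using LIMSEQ_unique by blast
  have G1: "G 1 = (\<Sum>k<N. (-1)^k * b k * real (N - k)) / real N"
    unfolding G_def by simp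
  have "(\<Sum>k<N. (-1)^k * b k * real (N - k))
      = (\<Sum>k<N. real N * ((-1)^k * b k) + (-1) ^ (k + 1) * real k * b k)"
    by (rule sum.cong) (simp_all add: of_nat_diff algebra_simps)
  also have "\<dots> = real N * (\<Sum>k<N. (-1)^k * b k) + (\<Sum>k<N. (-1) ^ (k + 1) * real k * b k)"
    by (simp only: sum.distrib sum_distrib_left)
  also have "\<dots> = (\<Sum>k<N. (-1) ^ (k + 1) * real k * b k)"
    by (simp only: S0 mult_zero_right add_0_left)
  finally have "snd (q 0) = (\<Sum>k<N. (-1) ^ (k + 1) * real k * b k) / real N"
    using q0 G1 by simp
  then show ?thesis by (simp add: N_def b_def)
qed

end
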